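(* Let $N\ge 1$ and let $T:M(N)\to M(N)$ be a linear map. For unitaries $U_1,U_2,V_1,V_2\in M(N)$ define the linear map $T(U_1,U_2,V_1,V_2):\mathbb{C}^N\to\mathbb{C}^N$ by $\lambda\mapsto \operatorname{diag}\big(U_2\,T(U_1D_\lambda V_1)\,V_2\big)$, where $D_\lambda=\operatorname{diag}(\lambda)$ is the diagonal matrix with diagonal $\lambda$ and, for a matrix $B$, $\operatorname{diag}(B)\in\mathbb{C}^N$ is its diagonal vector. Then for every $1\le p\le\infty$, $$\|T\|_{p\to p}=\sup_{U_1,U_2,V_1,V_2}\|T(U_1,U_2,V_1,V_2)\|_{\ell_p\to\ell_p},$$ the supremum being over all unitaries $U_1,U_2,V_1,V_2\in M(N)$.
   Context: $M(N)$ is the space of $N\times N$ complex matrices. For $1\le p<\infty$, $\|A\|_p=(\sum_i\sigma_i(A)^p)^{1/p}$ is the Schatten-$p$ norm (with $\sigma_i(A)$ the singular values), and $\|A\|_\infty$ is the operator (spectral) norm. $\|T\|_{p\to p}=\sup_{X\ne 0}\|T(X)\|_p/\|X\|_p$. For a linear map $S$ on $\mathbb{C}^N$, $\|S\|_{\ell_p\to\ell_p}=\sup_{x\neq 0}\|Sx\|_{\ell_p}/\|x\|_{\ell_p}$. *)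

theory Defs
  imports "HOL-Analysis.Analysis" "HOL-Computational_Algebra.Polynomial"
begin

text \<open>N x N complex matrices are modelled as complex^'n^'n, with N = CARD('n) >= 1.\<close>

definition adjoint_mat :: "complex^'n^'m \<Rightarrow> complex^'m^'n" where
  "adjoint_mat A = (\<chi> i j. cnj (A $ j $ i))"

definition unitary_mat :: "complex^'n^'n \<Rightarrow> bool" where
  "unitary_mat U \<longleftrightarrow> adjoint_mat U ** U = mat 1 \<and> U ** adjoint_mat U = mat 1"

definition char_poly_mat :: "complex^'n^'n \<Rightarrow> complex poly" where
  "char_poly_mat A = det ((\<chi> i j. (if i = j then [:0, 1:] else 0) - [: A $ i $ j :]) :: complex poly^'n^'n)"

definition singular_values :: "complex^'n^'n \<Rightarrow> real multiset" where
  "singular_values A = image_mset (\<lambda>z. sqrt (Re z)) (proots (char_poly_mat (adjoint_mat A ** A)))"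

definition schatten_norm :: "ereal \<Rightarrow> complex^'n^'n \<Rightarrow> real" where
  "schatten_norm p A =
     (if p = \<infinity> then onorm (\<lambda>x. A *v x)
      else (\<Sum>s\<in>#singular_values A. s powr real_of_ereal p) powr (1 / real_of_ereal p))"

definition lp_norm :: "ereal \<Rightarrow> complex^'n \<Rightarrow> real" where
  "lp_norm p x =
     (if p = \<infinity> then Max (range (\<lambda>i. norm (x $ i)))
      else (\<Sum>i\<in>UNIV. norm (x $ i) powr real_of_ereal p) powr (1 / real_of_ereal p))"

definition schatten_opnorm :: "ereal \<Rightarrow> (complex^'n^'n \<Rightarrow> complex^'n^'n) \<Rightarrow> real" where
  "schatten_opnorm p T = (SUP X\<in>{X. X \<noteq> 0}. schatten_norm p (T X) / schatten_norm p X)"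

definition lp_opnorm :: "ereal \<Rightarrow> (complex^'n \<Rightarrow> complex^'n) \<Rightarrow> real" where
  "lp_opnorm p S = (SUP x\<in>{x. x \<noteq> 0}. lp_norm p (S x) / lp_norm p x)"

definition complex_linear_mat :: "(complex^'n^'n \<Rightarrow> complex^'n^'n) \<Rightarrow> bool" where
  "complex_linear_mat T \<longleftrightarrow>
     (\<forall>X Y. T (X + Y) = T X + T Y) \<and>
     (\<forall>c X. T (\<chi> i j. c * X $ i $ j) = (\<chi> i j. c * T X $ i $ j))"

definition diag_of_vec :: "complex^'n \<Rightarrow> complex^'n^'n" where
  "diag_of_vec l = (\<chi> i j. if i = j then l $ i else 0)"

definition diag_vec :: "complex^'n^'n \<Rightarrow> complex^'n" where
  "diag_vec B = (\<chi> i. B $ i $ i)"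

definition compressed_map ::
  "(complex^'n^'n \<Rightarrow> complex^'n^'n) \<Rightarrow> complex^'n^'n \<Rightarrow> complex^'n^'n \<Rightarrow>
   complex^'n^'n \<Rightarrow> complex^'n^'n \<Rightarrow> complex^'n \<Rightarrow> complex^'n" where
  "compressed_map T U1 U2 V1 V2 = (\<lambda>l. diag_vec (U2 ** T (U1 ** diag_of_vec l ** V1) ** V2))"

end

theory Submission
  imports Defs
begin


lemma selfadj_eig:
  fixes f :: "'a::euclidean_space \<Rightarrow> 'a"
  assumes lin: "linear f" and sa: "\<And>x y. inner (f x) y = inner x (f y)"
    and sub: "subspace W" and inv: "\<And>x. x \<in> W \<Longrightarrow> f x \<in> W"
    and ne: "z0 \<in> W" "z0 \<noteq> 0"
  shows "\<exists>x\<in>W. norm x = 1 \<and> (\<exists>\<mu>. f x = \<mu> *\<^sub>R x)"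
proof -
  define S where "S = sphere (0::'a) 1 \<inter> W"
  define q where "q z = inner (f z) z" for z
  have cS: "compact S" unfolding S_def
    by (simp add: closed_subspace compact_Int_closed sub)
  have "z0 /\<^sub>R norm z0 \<in> S" using ne sub unfolding S_def
    by (simp add: subspace_scale)
  hence Sne: "S \<noteq> {}" by blast
  have bl: "bounded_linear f" using lin linear_conv_bounded_linear by blast
  have cq: "continuous_on S q" unfolding q_def
    by (intro continuous_intros linear_continuous_on bl)
  obtain x where xS: "x \<in> S" and xmax: "\<And>y. y \<in> S \<Longrightarrow> q y \<le> q x"
    using continuous_attains_sup[OF cS Sne cq] by blast
  define M where "M = q x"
  have xW: "x \<in> W" and nx: "norm x = 1" using xS unfolding S_def by auto
  have qscale: "q (c *\<^sub>R z) = c^2 * q z" for c z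
    unfolding q_def using lin by (simp add: linear_scale power2_eq_square)
  have qle: "q z \<le> M * (norm z)^2" if "z \<in> W" for z
  proof (cases "z = 0")
    case True then show ?thesis unfolding q_def using lin by (simp add: linear_0)
  next
    case False
    have "z /\<^sub>R norm z \<in> S" using that False sub unfolding S_def
      by (simp add: subspace_scale)
    hence "q (z /\<^sub>R norm z) \<le> M" using xmax M_def by blast
    hence "q z / (norm z)^2 \<le> M" using qscale[of "inverse (norm z)" z]
      by (simp add: power_inverse divide_inverse mult.commute)
    thus ?thesis using False by (simp add: divide_le_eq mult.commute)
  qed
  have orth: "inner (f x) y = 0" if yW: "y \<in> W" and xy: "inner x y = 0" for y
  proof -
    define a where "a = inner (f x) y"
    define b where "b = M * (norm y)^2 - q y"
    have key: "2 * t * a \<le> t^2 * b" for t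
    proof -
      have "x + t *\<^sub>R y \<in> W" using xW yW sub by (simp add: subspace_add subspace_scale)
      hence "q (x + t *\<^sub>R y) \<le> M * (norm (x + t *\<^sub>R y))^2" by (rule qle)
      moreover have "q (x + t *\<^sub>R y) = q x + 2 * t * a + t^2 * q y"
        unfolding q_def a_def using lin sa[of y x]
        by (simp add: linear_add linear_scale inner_add_left inner_add_right power2_eq_square inner_commute algebra_simps)
      moreover have "(norm (x + t *\<^sub>R y))^2 = 1 + t^2 * (norm y)^2"
      proof -
        have xx: "inner x x = 1" using nx by (simp add: power2_norm_eq_inner[symmetric])
        have "(norm (x + t *\<^sub>R y))^2 = inner (x + t *\<^sub>R y) (x + t *\<^sub>R y)" by (rule power2_norm_eq_inner)
        also have "\<dots> = 1 + t^2 * inner y y" using xx xy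
          by (simp add: inner_add_left inner_add_right inner_commute power2_eq_square algebra_simps)
        finally show ?thesis by (simp add: power2_norm_eq_inner)
      qed
      ultimately show ?thesis unfolding b_def M_def by (simp add: algebra_simps)
    qed
    show ?thesis
    proof (rule ccontr)
      assume "inner (f x) y \<noteq> 0"
      hence an: "a \<noteq> 0" by (simp add: a_def)
      define t where "t = a / (\<bar>b\<bar> + 1)"
      have "2 * t * a \<le> t^2 * b" by (rule key)
      moreover have "t * a > 0"
      proof -
        have "t * a = (a * a) / (\<bar>b\<bar> + 1)" by (simp add: t_def)
        moreover have "a * a > 0" using an by (auto simp add: zero_less_mult_iff linorder_neq_iff)
        moreover have "\<bar>b\<bar> + 1 > 0" by simp
        ultimately show ?thesis by simp
      qed
      moreover have "t^2 * b \<le> t^2 * \<bar>b\<bar>" by (simp add: mult_left_mono)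
      moreover have "t^2 * \<bar>b\<bar> < t * a"
      proof -
        have "t^2 * \<bar>b\<bar> = t * a * (\<bar>b\<bar> / (\<bar>b\<bar> + 1))" unfolding t_def
          by (simp add: power2_eq_square field_simps)
        also have "\<dots> < t * a" using \<open>t * a > 0\<close>
        proof -
          have "\<bar>b\<bar> / (\<bar>b\<bar> + 1) < 1" by simp
          thus ?thesis using \<open>t * a > 0\<close> by (metis mult.right_neutral mult_strict_left_mono)
        qed
        finally show ?thesis .
      qed
      ultimately show False by linarith
    qed
  qed
  define r where "r = f x - M *\<^sub>R x"
  have rW: "r \<in> W" unfolding r_def using xW inv sub by (simp add: subspace_diff subspace_scale)
  have rx: "inner x r = 0"
    unfolding r_def M_def q_def using nx by (simp add: inner_diff_right inner_commute power2_norm_eq_inner[symmetric])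
  have "inner (f x) r = 0" using orth[OF rW rx] .
  hence "inner r r = 0" unfolding r_def using rx[unfolded r_def]
    by (simp add: inner_diff_left inner_diff_right algebra_simps)
  hence "r = 0" by simp
  thus ?thesis using xW nx unfolding r_def by auto
qed




lemma powr_convex0:
  fixes p :: real assumes p: "p \<ge> 1"
  shows "convex_on {0..} (\<lambda>x. x powr p)"
proof (rule convex_onI)
  fix t x y :: real
  assume t: "0 < t" "t < 1" and x: "x \<in> {0..}" and y: "y \<in> {0..}"
  show "((1 - t) *\<^sub>R x + t *\<^sub>R y) powr p \<le> (1 - t) * x powr p + t * y powr p"
  proof (cases "x = 0 \<or> y = 0")
    case False
    hence "x \<in> {0<..}" "y \<in> {0<..}" using x y by auto
    thus ?thesis using convex_onD[OF powr_convex[OF p], of t x y] t by auto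
  next
    case True
    have le: "c powr p \<le> c" if "0 \<le> c" "c \<le> 1" for c :: real
      using powr_mono'[of 1 p c] that p by (cases "c = 0") auto
    show ?thesis
    proof (cases "x = 0")
      case True
      have "(t * y) powr p = t powr p * y powr p" using t y by (simp add: powr_mult)
      also have "\<dots> \<le> t * y powr p" using le[of t] t by (simp add: mult_right_mono)
      finally show ?thesis using True p t by simp
    next
      case False
      hence y0: "y = 0" using True by simp
      have "((1-t) * x) powr p = (1-t) powr p * x powr p" using t x by (simp add: powr_mult)
      also have "\<dots> \<le> (1-t) * x powr p" using le[of "1-t"] t by (simp add: mult_right_mono)
      finally show ?thesis using y0 p t by simp
    qed
  qed
qed (simp add: convex_real_interval)

lemma jensen_sub:
  fixes a s :: "'i \<Rightarrow> real" and p :: real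
  assumes fin: "finite I" and p: "p \<ge> 1" and a: "\<And>j. j \<in> I \<Longrightarrow> a j \<ge> 0"
    and s: "\<And>j. j \<in> I \<Longrightarrow> s j \<ge> 0" and sa: "sum a I \<le> 1"
  shows "(\<Sum>j\<in>I. a j * s j) powr p \<le> (\<Sum>j\<in>I. a j * s j powr p)"
proof (cases "sum a I = 0")
  case True
  hence "\<forall>j\<in>I. a j = 0" using sum_nonneg_eq_0_iff[OF fin] a by blast
  thus ?thesis using p by simp
next
  case False
  define A where "A = sum a I"
  have A0: "A > 0" using False a sum_nonneg[of I a] unfolding A_def by fastforce
  have Ine: "I \<noteq> {}" using False by auto
  have "(\<Sum>j\<in>I. (a j / A) *\<^sub>R s j) powr p \<le> (\<Sum>j\<in>I. (a j / A) * s j powr p)"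
    apply (rule convex_on_sum[OF fin Ine powr_convex0[OF p]])
    using a s A0 by (auto simp: A_def sum_divide_distrib[symmetric])
  hence "((\<Sum>j\<in>I. a j * s j) / A) powr p \<le> (\<Sum>j\<in>I. a j * s j powr p) / A"
    by (simp add: sum_divide_distrib)
  hence "(\<Sum>j\<in>I. a j * s j) powr p / A powr p \<le> (\<Sum>j\<in>I. a j * s j powr p) / A"
    using A0 by (simp add: powr_divide sum_nonneg a s)
  hence "(\<Sum>j\<in>I. a j * s j) powr p \<le> (\<Sum>j\<in>I. a j * s j powr p) * (A powr p / A)"
    using A0 by (simp add: field_simps)
  moreover have "A powr p / A \<le> 1"
  proof -
    have "A \<le> 1" using sa A_def by simp
    hence "A powr p \<le> A powr 1" using A0 p powr_mono'[of 1 p A] by simp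
    thus ?thesis using A0 by simp
  qed
  moreover have "(\<Sum>j\<in>I. a j * s j powr p) \<ge> 0" using a s by (simp add: sum_nonneg)
  ultimately show ?thesis by (smt (verit) mult_left_le)
qed




definition cinner :: "complex^'n \<Rightarrow> complex^'n \<Rightarrow> complex" where
  "cinner x y = (\<Sum>i\<in>UNIV. x$i * cnj (y$i))"

definition ivec :: "complex^'n \<Rightarrow> complex^'n" where
  "ivec y = (\<chi> t. \<i> * y$t)"

definition ortho :: "'n set \<Rightarrow> ('n \<Rightarrow> complex^'m) \<Rightarrow> bool" where
  "ortho K g \<longleftrightarrow> (\<forall>j\<in>K. \<forall>k\<in>K. cinner (g j) (g k) = (if j = k then 1 else 0))"

lemma sR_comp: "((c::real) *\<^sub>R (x::complex^'n))$i = complex_of_real c * x$i"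
  by (subst vector_scaleR_component) (rule scaleR_conv_of_real)

lemma cinner_commute: "cinner y x = cnj (cinner x y)"
  by (simp add: cinner_def mult.commute)

lemma cinner_add_left: "cinner (x + y) z = cinner x z + cinner y z"
  by (simp add: cinner_def algebra_simps sum.distrib)

lemma cinner_scaleR_left: "cinner (c *\<^sub>R x) y = of_real c * cinner x y"
  unfolding cinner_def sR_comp by (simp add: sum_distrib_left algebra_simps)

lemma cinner_scaleR_right: "cinner x (c *\<^sub>R y) = of_real c * cinner x y"
  unfolding cinner_def sR_comp by (simp add: sum_distrib_left algebra_simps)

lemma cinner_zero_left [simp]: "cinner 0 y = 0"
  by (simp add: cinner_def)

lemma inner_cinner: "inner x y = Re (cinner x y)"
  by (simp add: cinner_def inner_vec_def inner_complex_def)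

lemma inner_ivec: "inner x (ivec y) = Im (cinner x y)"
  by (simp add: cinner_def inner_vec_def inner_complex_def ivec_def Im_sum)

lemma norm_sq_vec: "(norm (x::complex^'n))^2 = (\<Sum>i\<in>UNIV. (norm (x$i))^2)"
  by (simp add: norm_vec_def L2_set_def sum_nonneg)

lemma cinner_self: "cinner x x = of_real ((norm x)^2)"
proof -
  have "cinner x x = (\<Sum>i\<in>UNIV. of_real ((norm (x$i))^2))"
    unfolding cinner_def by (rule sum.cong[OF refl], rule complex_norm_square[symmetric])
  also have "\<dots> = of_real (\<Sum>i\<in>UNIV. (norm (x$i))^2)" by simp
  finally show ?thesis by (simp add: norm_sq_vec)
qed

lemma cinner_mv: "cinner (A *v x) y = cinner x (adjoint_mat A *v y)"
proof -
  have "cinner (A *v x) y = (\<Sum>i\<in>UNIV. \<Sum>j\<in>UNIV. A$i$j * x$j * cnj (y$i))"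
    by (simp add: cinner_def matrix_vector_mult_def sum_distrib_right)
  also have "\<dots> = (\<Sum>j\<in>UNIV. \<Sum>i\<in>UNIV. A$i$j * x$j * cnj (y$i))" by (rule sum.swap)
  also have "\<dots> = cinner x (adjoint_mat A *v y)"
    by (simp add: cinner_def matrix_vector_mult_def adjoint_mat_def sum_distrib_left algebra_simps)
  finally show ?thesis .
qed

lemma compl_exists:
  fixes K :: "'n::finite set" and g :: "'n \<Rightarrow> complex^'n"
  assumes "K \<noteq> UNIV"
  shows "\<exists>x. x \<noteq> 0 \<and> (\<forall>j\<in>K. cinner x (g j) = 0)"
proof -
  define S where "S = g ` K \<union> (ivec \<circ> g) ` K"
  have fS: "finite S" unfolding S_def by simp
  have "card S \<le> card (g ` K) + card ((ivec \<circ> g) ` K)" unfolding S_def by (rule card_Un_le)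
  also have "\<dots> \<le> card K + card K" by (intro add_mono card_image_le) auto
  also have "card K < CARD('n)" using assms by (intro psubset_card_mono) auto
  hence "card K + card K < DIM(complex^'n)" by simp
  finally have "dim S < DIM(complex^'n)" using dim_le_card'[OF fS] by linarith
  then obtain x where x0: "x \<noteq> 0" and xo: "\<And>y. y \<in> span S \<Longrightarrow> orthogonal x y"
    using orthogonal_to_subspace_exists by blast
  have "cinner x (g j) = 0" if "j \<in> K" for j
  proof -
    have "g j \<in> span S" "ivec (g j) \<in> span S" using that unfolding S_def by (auto intro: span_base)
    hence a: "inner x (g j) = 0" and b: "inner x (ivec (g j)) = 0" using xo unfolding orthogonal_def by auto
    have "Re (cinner x (g j)) = 0" using a by (simp only: inner_cinner)
    moreover have "Im (cinner x (g j)) = 0" using b by (simp only: inner_ivec)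
    ultimately show ?thesis by (simp add: complex_eq_iff)
  qed
  thus ?thesis using x0 by blast
qed

lemma ext_family:
  fixes P :: "complex^'n \<Rightarrow> bool" and K :: "'n set" and g :: "'n \<Rightarrow> complex^'n"
  assumes step: "\<And>K g. K \<noteq> (UNIV::'n set) \<Longrightarrow> ortho K g \<Longrightarrow> (\<forall>j\<in>K. P (g j)) \<Longrightarrow>
      \<exists>x. cinner x x = 1 \<and> P x \<and> (\<forall>j\<in>K. cinner x (g j) = 0)"
  shows "ortho K g \<Longrightarrow> (\<forall>j\<in>K. P (g j)) \<Longrightarrow> \<exists>h. ortho UNIV h \<and> (\<forall>j. P (h j)) \<and> (\<forall>j\<in>K. h j = g j)"
proof (induction "card (UNIV - K)" arbitrary: K g)
  case 0
  have "finite (UNIV - K)" by simp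
  hence "UNIV - K = {}" using 0 by simp
  hence "K = UNIV" by auto
  thus ?case using 0 by auto
next
  case (Suc m)
  hence "K \<noteq> UNIV" by auto
  then obtain k where k: "k \<notin> K" by auto
  obtain x where x1: "cinner x x = 1" and Px: "P x" and xo: "\<forall>j\<in>K. cinner x (g j) = 0"
    using step[OF \<open>K \<noteq> UNIV\<close> Suc.prems] by blast
  define g' where "g' = g(k := x)"
  have "UNIV - insert k K = (UNIV - K) - {k}" by auto
  hence "card (UNIV - insert k K) = card (UNIV - K) - 1" using k by (simp add: card_Diff_singleton)
  hence c: "m = card (UNIV - insert k K)" using Suc.hyps(2) by simp
  have o': "ortho (insert k K) g'"
    unfolding ortho_def
  proof (intro ballI)
    fix a b assume a: "a \<in> insert k K" and b: "b \<in> insert k K"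
    show "cinner (g' a) (g' b) = (if a = b then 1 else 0)"
    proof (cases "a = k")
      case True
      show ?thesis
      proof (cases "b = k")
        case True
        thus ?thesis using \<open>a = k\<close> x1 by (simp add: g'_def)
      next
        case False
        hence "b \<in> K" using b by simp
        thus ?thesis using \<open>a = k\<close> False xo by (simp add: g'_def)
      qed
    next
      case False
      hence aK: "a \<in> K" using a by simp
      show ?thesis
      proof (cases "b = k")
        case True
        have "cinner (g a) x = cnj (cinner x (g a))" by (rule cinner_commute)
        thus ?thesis using True False xo aK by (simp add: g'_def)
      next
        case bk: False
        hence "b \<in> K" using b by simp
        thus ?thesis using aK False bk Suc.prems(1) unfolding ortho_def by (simp add: g'_def)
      qed
    qed
  qed
  have P': "\<forall>j\<in>insert k K. P (g' j)" using Suc.prems(2) Px k unfolding g'_def by auto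
  obtain h where h: "ortho UNIV h" "\<forall>j. P (h j)" "\<forall>j\<in>insert k K. h j = g' j"
    using Suc.hyps(1)[OF c o' P'] by (elim exE conjE)
  have "\<forall>j\<in>K. h j = g j" using h(3) k unfolding g'_def by auto
  thus ?case using h(1,2) by blast
qed

lemma ext_family0:
  fixes P :: "complex^'n \<Rightarrow> bool"
  assumes step: "\<And>K g. K \<noteq> (UNIV::'n set) \<Longrightarrow> ortho K g \<Longrightarrow> (\<forall>j\<in>K. P (g j)) \<Longrightarrow>
      \<exists>x. cinner x x = 1 \<and> P x \<and> (\<forall>j\<in>K. cinner x (g j) = 0)"
  shows "\<exists>h::'n \<Rightarrow> complex^'n. ortho UNIV h \<and> (\<forall>j. P (h j))"
proof -
  have "ortho {} (\<lambda>_. 0::complex^'n)" by (simp add: ortho_def)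
  have "\<exists>h::'n\<Rightarrow>complex^'n. ortho UNIV h \<and> (\<forall>j. P (h j)) \<and> (\<forall>j\<in>{}. h j = 0)"
    apply (rule ext_family[where K="{}" and g="\<lambda>_. 0"])
      apply (rule step; assumption)
     apply (simp add: ortho_def)
    apply simp
    done
  then obtain h :: "'n \<Rightarrow> complex^'n" where h: "ortho UNIV h" "\<forall>j. P (h j)"
    by (elim exE conjE)
  show ?thesis using h by blast
qed

lemma mv_add: "(A::complex^'n^'m) *v (x + y) = A *v x + A *v y"
  by (simp add: matrix_vector_mult_def vec_eq_iff algebra_simps sum.distrib)

lemma mv_scaleR: "(A::complex^'n^'m) *v (c *\<^sub>R x) = c *\<^sub>R (A *v x)"
  unfolding matrix_vector_mult_def vec_eq_iff sR_comp
  by (simp add: sum_distrib_left algebra_simps)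

lemma linear_mv: "linear (\<lambda>x. (A::complex^'n^'m) *v x)"
  by (rule linearI) (simp_all add: mv_add mv_scaleR)

lemma herm_eig:
  fixes H :: "complex^'n^'n"
  assumes hH: "adjoint_mat H = H"
  shows "\<exists>v::'n \<Rightarrow> complex^'n. ortho UNIV v \<and> (\<forall>k. \<exists>\<mu>::real. H *v v k = \<mu> *\<^sub>R v k)"
proof -
  let ?P = "\<lambda>x. \<exists>\<mu>::real. H *v x = \<mu> *\<^sub>R x"
  have step: "\<exists>x. cinner x x = 1 \<and> ?P x \<and> (\<forall>j\<in>K. cinner x (g j) = 0)"
    if K: "K \<noteq> UNIV" and o: "ortho K g" and P: "\<forall>j\<in>K. ?P (g j)" for K :: "'n set" and g :: "'n \<Rightarrow> complex^'n"
  proof -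
    define W where "W = {x. \<forall>j\<in>K. cinner x (g j) = 0}"
    obtain z0 where z0: "z0 \<noteq> 0" "\<forall>j\<in>K. cinner z0 (g j) = 0" using compl_exists[OF K] by blast
    have sub: "subspace W" unfolding subspace_def W_def
      by (simp add: cinner_add_left cinner_scaleR_left)
    have inv: "H *v x \<in> W" if "x \<in> W" for x
    proof -
      have "cinner (H *v x) (g j) = 0" if "j \<in> K" for j
      proof -
        obtain \<mu> where "H *v g j = \<mu> *\<^sub>R g j" using P \<open>j \<in> K\<close> by blast
        hence "cinner (H *v x) (g j) = of_real \<mu> * cinner x (g j)"
          by (simp add: cinner_mv hH cinner_scaleR_right)
        thus ?thesis using \<open>x \<in> W\<close> that unfolding W_def by simp
      qed
      thus ?thesis unfolding W_def by simp
    qed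
    have sa: "inner (H *v x) y = inner x (H *v y)" for x y
      by (simp add: inner_cinner cinner_mv hH)
    obtain x where "x \<in> W" "norm x = 1" "\<exists>\<mu>. H *v x = \<mu> *\<^sub>R x"
      using selfadj_eig[OF linear_mv sa sub inv, of z0] z0 unfolding W_def by blast
    moreover have "cinner x x = 1" using \<open>norm x = 1\<close> by (simp add: cinner_self)
    ultimately show ?thesis unfolding W_def by blast
  qed
  have "\<exists>h::'n \<Rightarrow> complex^'n. ortho UNIV h \<and> (\<forall>j. ?P (h j))"
    by (rule ext_family0, rule step, assumption+)
  thus ?thesis by blast
qed




definition colmat :: "('n \<Rightarrow> complex^'n) \<Rightarrow> complex^'n^'n" where
  "colmat v = (\<chi> i k. v k $ i)"

lemma adjoint_adjoint [simp]: "adjoint_mat (adjoint_mat A) = A"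
  by (simp add: adjoint_mat_def vec_eq_iff)

lemma adjoint_mult: "adjoint_mat (A ** B) = adjoint_mat B ** adjoint_mat A"
  by (simp add: adjoint_mat_def matrix_matrix_mult_def vec_eq_iff mult.commute)

lemma adjoint_mat1 [simp]: "adjoint_mat (mat 1 :: complex^'n^'n) = mat 1"
  by (simp add: adjoint_mat_def mat_def vec_eq_iff)

lemma unitary_adjoint: "unitary_mat U \<Longrightarrow> unitary_mat (adjoint_mat U)"
  by (simp add: unitary_mat_def)

lemma unitary_mult:
  assumes "unitary_mat U" "unitary_mat V" shows "unitary_mat (U ** V)"
proof -
  have "adjoint_mat (U ** V) ** (U ** V) = adjoint_mat V ** (adjoint_mat U ** U) ** V"
    by (simp add: adjoint_mult matrix_mul_assoc)
  also have "\<dots> = mat 1" using assms by (simp add: unitary_mat_def)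
  finally have 1: "adjoint_mat (U ** V) ** (U ** V) = mat 1" .
  have "(U ** V) ** adjoint_mat (U ** V) = U ** (V ** adjoint_mat V) ** adjoint_mat U"
    by (simp add: adjoint_mult matrix_mul_assoc)
  also have "\<dots> = mat 1" using assms by (simp add: unitary_mat_def)
  finally show ?thesis using 1 by (simp add: unitary_mat_def)
qed

lemma unitary_one: "unitary_mat (mat 1 :: complex^'n^'n)"
  by (simp add: unitary_mat_def)

lemma unitary_colmat:
  assumes o: "ortho UNIV v" shows "unitary_mat (colmat v)"
proof -
  have 1: "adjoint_mat (colmat v) ** colmat v = mat 1"
  proof -
    have "(adjoint_mat (colmat v) ** colmat v) $ k $ l = mat 1 $ k $ l" for k l
    proof -
      have "(adjoint_mat (colmat v) ** colmat v) $ k $ l = cinner (v l) (v k)"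
        by (simp add: adjoint_mat_def colmat_def matrix_matrix_mult_def cinner_def mult.commute)
      also have "\<dots> = mat 1 $ k $ l" using o unfolding ortho_def by (simp add: mat_def)
      finally show ?thesis .
    qed
    thus ?thesis by (simp add: vec_eq_iff)
  qed
  hence "colmat v ** adjoint_mat (colmat v) = mat 1" using matrix_left_right_inverse by blast
  thus ?thesis using 1 unfolding unitary_mat_def by blast
qed

lemma svd: "\<exists>U V d. unitary_mat U \<and> unitary_mat V \<and> A = U ** diag_of_vec d ** V"
proof -
  define H where "H = adjoint_mat A ** A"
  have hH: "adjoint_mat H = H" unfolding H_def by (simp add: adjoint_mult)
  obtain v :: "'a \<Rightarrow> complex^'a" where ov: "ortho UNIV v" and ev: "\<forall>k. \<exists>\<mu>::real. H *v v k = \<mu> *\<^sub>R v k"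
    using herm_eig[OF hH] by blast
  define K where "K = {k. A *v v k \<noteq> 0}"
  define g where "g k = (1 / norm (A *v v k)) *\<^sub>R (A *v v k)" for k
  have cA: "cinner (A *v v j) (A *v v k) = (if j = k then of_real ((norm (A *v v k))^2) else 0)" for j k
  proof (cases "j = k")
    case True thus ?thesis by (simp add: cinner_self)
  next
    case False
    obtain \<mu> where mu: "H *v v k = \<mu> *\<^sub>R v k" using ev by blast
    have "cinner (A *v v j) (A *v v k) = cinner (v j) (H *v v k)"
      by (simp add: cinner_mv H_def matrix_vector_mul_assoc)
    also have "\<dots> = 0" using mu ov False unfolding ortho_def by (simp add: cinner_scaleR_right)
    finally show ?thesis using False by simp
  qed
  have oK: "ortho K g"
    unfolding ortho_def
  proof (intro ballI)
    fix j k assume "j \<in> K" "k \<in> K"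
    hence nz: "norm (A *v v k) \<noteq> 0" by (simp add: K_def)
    show "cinner (g j) (g k) = (if j = k then 1 else 0)"
      unfolding g_def cinner_scaleR_left cinner_scaleR_right cA
      using nz by (auto simp: power2_eq_square)
  qed
  have step: "\<exists>x. cinner x x = 1 \<and> True \<and> (\<forall>j\<in>K'. cinner x (g' j) = 0)"
    if K'ne: "K' \<noteq> UNIV" for K' :: "'a set" and g' :: "'a \<Rightarrow> complex^'a"
  proof -
    obtain x where x: "x \<noteq> 0" "\<forall>j\<in>K'. cinner x (g' j) = 0" using compl_exists[OF K'ne] by blast
    define y where "y = (1 / norm x) *\<^sub>R x"
    have "cinner y y = 1" using x unfolding y_def
      by (simp add: cinner_scaleR_left cinner_scaleR_right cinner_self power2_eq_square)
    moreover have "\<forall>j\<in>K'. cinner y (g' j) = 0" using x unfolding y_def by (simp add: cinner_scaleR_left)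
    ultimately show ?thesis by blast
  qed
  have "\<exists>h::'a\<Rightarrow>complex^'a. ortho UNIV h \<and> (\<forall>j::'a. True) \<and> (\<forall>j\<in>K. h j = g j)"
    apply (rule ext_family[where K=K and g=g and P="\<lambda>_. True"])
      apply (rule step; assumption)
     apply (rule oK)
    apply simp
    done
  then obtain u :: "'a \<Rightarrow> complex^'a" where ou: "ortho UNIV u" and ug: "\<forall>j\<in>K. u j = g j"
    by (elim exE conjE)
  define d where "d = (\<chi> k. complex_of_real (norm (A *v v k)))"
  have Av: "(A *v v k) $ i = d $ k * u k $ i" for k i
  proof (cases "k \<in> K")
    case True
    hence nz: "norm (A *v v k) \<noteq> 0" by (simp add: K_def)
    have "u k $ i = complex_of_real (1 / norm (A *v v k)) * (A *v v k) $ i"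
    proof -
      have "u k = g k" using ug True by simp
      also have "g k $ i = complex_of_real (1 / norm (A *v v k)) * (A *v v k) $ i"
        by (simp only: g_def sR_comp)
      finally show ?thesis .
    qed
    thus ?thesis using nz by (simp add: d_def)
  next
    case False
    thus ?thesis by (simp add: K_def d_def)
  qed
  have AV: "A ** colmat v = colmat u ** diag_of_vec d"
  proof -
    have "(A ** colmat v) $ i $ k = (colmat u ** diag_of_vec d) $ i $ k" for i k
    proof -
      have "(A ** colmat v) $ i $ k = (A *v v k) $ i"
        by (simp add: matrix_matrix_mult_def matrix_vector_mult_def colmat_def)
      also have "\<dots> = d $ k * u k $ i" by (rule Av)
      also have "\<dots> = (colmat u ** diag_of_vec d) $ i $ k"
        by (simp add: matrix_matrix_mult_def colmat_def diag_of_vec_def if_distrib if_distribR cong: if_cong)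
      finally show ?thesis .
    qed
    thus ?thesis by (simp add: vec_eq_iff)
  qed
  have uv: "unitary_mat (colmat v)" by (rule unitary_colmat[OF ov])
  have "A = A ** (colmat v ** adjoint_mat (colmat v))" using uv by (simp add: unitary_mat_def)
  also have "\<dots> = colmat u ** diag_of_vec d ** adjoint_mat (colmat v)"
    by (simp add: matrix_mul_assoc AV)
  finally show ?thesis using unitary_colmat[OF ou] unitary_adjoint[OF uv] by blast
qed




definition lift :: "complex^'n^'m \<Rightarrow> complex poly^'n^'m" where
  "lift M = (\<chi> i j. [:M$i$j:])"

definition Xm :: "complex poly^'n^'n" where
  "Xm = (\<chi> i j. if i = j then [:0, 1:] else 0)"

lemma pc_add: "[:a + b:] = [:a:] + [:b::'a::comm_monoid_add:]"
  by (rule poly_eqI) (simp add: coeff_pCons split: nat.split)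

lemma pc_sum: "[:sum f A:] = (\<Sum>x\<in>A. [:f x:])"
  by (induction A rule: infinite_finite_induct) (auto simp: pc_add)

lemma pc_mult: "[:a * b:] = [:a:] * [:b::complex:]"
  by simp

lemma lift_mult: "lift (A ** B) = lift A ** lift B"
  by (simp add: lift_def matrix_matrix_mult_def vec_eq_iff pc_sum ac_simps)

lemma lift_one: "lift (mat 1 :: complex^'n^'n) = mat 1"
  by (simp add: lift_def mat_def vec_eq_iff)

lemma Xm_comm: "lift P ** Xm = Xm ** lift (P::complex^'n^'n)"
  by (simp add: lift_def Xm_def matrix_matrix_mult_def vec_eq_iff if_distrib if_distribR mult.commute cong: if_cong)

lemma mm_diff_left: "(A::'a::ring_1^'n^'m) ** (B - C) = A ** B - A ** C"
  by (simp add: matrix_matrix_mult_def vec_eq_iff sum_subtractf algebra_simps)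

lemma mm_diff_right: "((A::'a::ring_1^'n^'m) - B) ** C = A ** C - B ** C"
  by (simp add: matrix_matrix_mult_def vec_eq_iff sum_subtractf algebra_simps)

lemma cp_def2: "char_poly_mat M = det (Xm - lift M)"
  unfolding char_poly_mat_def Xm_def lift_def by (rule arg_cong[where f=det]) (simp add: vec_eq_iff)

lemma cp_sim:
  assumes u: "unitary_mat V"
  shows "char_poly_mat (adjoint_mat V ** M ** V) = char_poly_mat M"
proof -
  let ?P = "adjoint_mat V"
  have PV: "lift ?P ** lift V = mat 1" using u by (simp add: lift_mult[symmetric] unitary_mat_def lift_one)
  have "lift ?P ** Xm ** lift V = Xm"
    by (metis Xm_comm PV matrix_mul_assoc matrix_mul_rid)
  hence "Xm - lift (?P ** M ** V) = lift ?P ** (Xm - lift M) ** lift V"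
    by (simp add: lift_mult mm_diff_left mm_diff_right)
  hence "char_poly_mat (?P ** M ** V) = det (lift ?P) * det (Xm - lift M) * det (lift V)"
    by (simp add: cp_def2 det_mul)
  also have "\<dots> = det (Xm - lift M) * det (lift ?P ** lift V)" by (simp add: det_mul)
  also have "\<dots> = char_poly_mat M" using PV by (simp add: cp_def2)
  finally show ?thesis .
qed

lemma cp_diag: "char_poly_mat (diag_of_vec e) = (\<Prod>i\<in>UNIV. [:- (e$i), 1:])"
proof -
  let ?M = "(\<chi> i j. (if i = j then [:0, 1:] else 0) - [: diag_of_vec e $ i $ j :]) :: complex poly^'a^'a"
  have "det ?M = prod (\<lambda>i. ?M$i$i) UNIV" by (rule det_diagonal) (simp add: diag_of_vec_def)
  also have "\<dots> = (\<Prod>i\<in>UNIV. [:- (e$i), 1:])"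
    by (rule prod.cong) (simp_all add: diag_of_vec_def)
  finally show ?thesis unfolding char_poly_mat_def .
qed

lemma sum_single_mset: "finite A \<Longrightarrow> (\<Sum>i\<in>A. {# f i #}) = image_mset f (mset_set A)"
  by (induction A rule: finite_induct) auto

lemma proots_diag: "proots (char_poly_mat (diag_of_vec e)) = image_mset (\<lambda>i. e$i) (mset_set UNIV)"
proof -
  have "proots (char_poly_mat (diag_of_vec e)) = (\<Sum>i\<in>UNIV. proots [:- (e$i), 1:])"
    unfolding cp_diag by (rule proots_prod) simp
  also have "\<dots> = (\<Sum>i\<in>UNIV. {# e$i #})" by simp
  also have "\<dots> = image_mset (\<lambda>i. e$i) (mset_set UNIV)" by (rule sum_single_mset) simp
  finally show ?thesis .
qed




lemma adjD: "adjoint_mat (diag_of_vec d) ** diag_of_vec d = diag_of_vec (\<chi> i. complex_of_real ((norm (d$i))^2))"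
proof -
  have "(adjoint_mat (diag_of_vec d) ** diag_of_vec d) $ i $ j = diag_of_vec (\<chi> i. complex_of_real ((norm (d$i))^2)) $ i $ j" for i j
  proof -
    have "(adjoint_mat (diag_of_vec d) ** diag_of_vec d) $ i $ j
        = (\<Sum>k\<in>UNIV. cnj (if k = i then d$k else 0) * (if k = j then d$k else 0))"
      unfolding matrix_matrix_mult_def adjoint_mat_def diag_of_vec_def by simp
    also have "\<dots> = (\<Sum>k\<in>UNIV. if k = i then cnj (d$i) * (if i = j then d$i else 0) else 0)"
      by (rule sum.cong) auto
    also have "\<dots> = cnj (d$i) * (if i = j then d$i else 0)" by simp
    also have "\<dots> = diag_of_vec (\<chi> i. complex_of_real ((norm (d$i))^2)) $ i $ j"
      unfolding diag_of_vec_def using complex_norm_square[of "d$i"] by (cases "i = j") (auto simp: mult.commute)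
    finally show ?thesis .
  qed
  thus ?thesis by (simp add: vec_eq_iff)
qed

lemma sv_udv:
  assumes U: "unitary_mat U" and V: "unitary_mat V"
  shows "singular_values (U ** diag_of_vec d ** V) = image_mset (\<lambda>i. norm (d$i)) (mset_set UNIV)"
proof -
  let ?D = "diag_of_vec d"
  have "adjoint_mat (U ** ?D ** V) ** (U ** ?D ** V) = adjoint_mat V ** (adjoint_mat ?D ** (adjoint_mat U ** U) ** ?D) ** V"
    by (simp only: adjoint_mult matrix_mul_assoc)
  also have "\<dots> = adjoint_mat V ** diag_of_vec (\<chi> i. complex_of_real ((norm (d$i))^2)) ** V"
    using U by (simp add: unitary_mat_def adjD)
  finally have e: "adjoint_mat (U ** ?D ** V) ** (U ** ?D ** V) = \<dots>" .
  show ?thesis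
    unfolding singular_values_def e cp_sim[OF V] proots_diag
    by (simp add: multiset.map_comp o_def)
qed

lemma schatten_fin:
  assumes U: "unitary_mat U" and V: "unitary_mat V" and p: "p \<noteq> \<infinity>"
  shows "schatten_norm p (U ** diag_of_vec d ** V) = lp_norm p d"
  unfolding schatten_norm_def lp_norm_def sv_udv[OF U V] using p
  by (simp add: multiset.map_comp o_def sum_unfold_sum_mset)

lemma norm_unitary:
  assumes U: "unitary_mat U" shows "norm (U *v x) = norm x"
proof -
  have "cinner (U *v x) (U *v x) = cinner x x"
    using U by (simp add: cinner_mv matrix_vector_mul_assoc unitary_mat_def)
  hence "complex_of_real ((norm (U *v x))^2) = complex_of_real ((norm x)^2)" by (simp only: cinner_self)
  hence "(norm (U *v x))^2 = (norm x)^2" by (simp only: of_real_eq_iff)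
  thus ?thesis by (simp add: power2_eq_iff_nonneg)
qed

lemma bl_mv: "bounded_linear (\<lambda>x. (A::complex^'n^'m) *v x)"
  using linear_mv linear_conv_bounded_linear by blast

definition maxn :: "complex^'n \<Rightarrow> real" where
  "maxn d = Max (range (\<lambda>i. norm (d$i)))"

lemma maxn_ge: "norm (d$i) \<le> maxn d"
  unfolding maxn_def by (rule Max_ge) auto

lemma maxn_attained: "\<exists>k. norm (d$k) = maxn d"
proof -
  have "maxn d \<in> range (\<lambda>i. norm (d$i))" unfolding maxn_def by (rule Max_in) auto
  thus ?thesis by auto
qed

lemma maxn_nonneg: "0 \<le> maxn d"
  using maxn_ge[of d undefined] norm_ge_zero[of "d$undefined"] by linarith

lemma diag_mv: "(diag_of_vec d *v y) $ i = d$i * y$i"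
proof -
  have "(diag_of_vec d *v y) $ i = (\<Sum>j\<in>UNIV. (if i = j then d$i else 0) * y$j)"
    unfolding diag_of_vec_def matrix_vector_mult_def by simp
  also have "\<dots> = (\<Sum>j\<in>UNIV. if j = i then d$i * y$i else 0)" by (rule sum.cong) auto
  finally show ?thesis by simp
qed

lemma norm_diag_le: "norm (diag_of_vec d *v y) \<le> maxn d * norm y"
proof -
  have "(norm (diag_of_vec d *v y))^2 = (\<Sum>i\<in>UNIV. (norm (d$i))^2 * (norm (y$i))^2)"
    by (simp add: norm_sq_vec diag_mv norm_mult power_mult_distrib)
  also have "\<dots> \<le> (\<Sum>i\<in>UNIV. (maxn d)^2 * (norm (y$i))^2)"
  proof (rule sum_mono)
    fix i :: 'a
    have "(norm (d$i))^2 \<le> (maxn d)^2" by (rule power_mono[OF maxn_ge norm_ge_zero])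
    thus "(norm (d$i))^2 * (norm (y$i))^2 \<le> (maxn d)^2 * (norm (y$i))^2"
      by (rule mult_right_mono) simp
  qed
  also have "\<dots> = (maxn d * norm y)^2" by (simp add: norm_sq_vec power_mult_distrib sum_distrib_left)
  finally have "(norm (diag_of_vec d *v y))^2 \<le> (maxn d * norm y)^2" .
  moreover have "0 \<le> maxn d * norm y" using maxn_nonneg[of d] by simp
  ultimately show ?thesis by (rule power2_le_imp_le)
qed

lemma sum_axis_sq: "(\<Sum>i\<in>UNIV. (norm (axis k (c::complex) $ i))^2) = (norm c)^2"
proof -
  have "\<And>i. (norm (axis k c $ i))^2 = (if i = k then (norm c)^2 else 0)" by (simp add: axis_def)
  hence "(\<Sum>i\<in>UNIV. (norm (axis k (c::complex) $ i))^2) = (\<Sum>i\<in>UNIV. if i = k then (norm c)^2 else 0)"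
    by simp
  also have "\<dots> = (norm c)^2" by simp
  finally show ?thesis .
qed

lemma schatten_inf:
  assumes U: "unitary_mat U" and V: "unitary_mat V"
  shows "schatten_norm \<infinity> (U ** diag_of_vec d ** V) = lp_norm \<infinity> d"
proof -
  let ?A = "U ** diag_of_vec d ** V"
  have "onorm (\<lambda>x. ?A *v x) = maxn d"
  proof (rule antisym)
    show "onorm (\<lambda>x. ?A *v x) \<le> maxn d"
    proof (rule onorm_bound[OF maxn_nonneg])
      fix x
      have "?A *v x = U *v (diag_of_vec d *v (V *v x))"
        by (simp add: matrix_vector_mul_assoc matrix_mul_assoc)
      hence "norm (?A *v x) = norm (diag_of_vec d *v (V *v x))"
        using U by (simp add: norm_unitary)
      also have "\<dots> \<le> maxn d * norm (V *v x)" by (rule norm_diag_le)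
      also have "\<dots> = maxn d * norm x" using V by (simp add: norm_unitary)
      finally show "norm (?A *v x) \<le> maxn d * norm x" .
    qed
  next
    obtain k where k: "norm (d$k) = maxn d" using maxn_attained by blast
    define e where "e = (axis k (1::complex) :: complex^'a)"
    define x where "x = adjoint_mat V *v e"
    have ne: "norm e = 1"
    proof -
      have "(norm e)^2 = 1" unfolding norm_sq_vec e_def by (simp add: sum_axis_sq)
      hence "sqrt ((norm e)^2) = 1" by simp
      thus ?thesis by simp
    qed
    have nx: "norm x = 1" unfolding x_def using unitary_adjoint[OF V] ne by (simp add: norm_unitary)
    have Ve: "V *v x = e" using V by (simp add: x_def matrix_vector_mul_assoc unitary_mat_def)
    have "?A *v x = U *v (diag_of_vec d *v (V *v x))"
      by (simp add: matrix_vector_mul_assoc matrix_mul_assoc)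
    hence "?A *v x = U *v (diag_of_vec d *v e)" using Ve by simp
    hence "norm (?A *v x) = norm (diag_of_vec d *v e)" using U by (simp add: norm_unitary)
    also have "\<dots> = norm (d$k)"
    proof -
      have "diag_of_vec d *v e = axis k (d$k)"
        by (simp add: vec_eq_iff diag_mv e_def axis_def)
      hence "(norm (diag_of_vec d *v e))^2 = (norm (d$k))^2" unfolding norm_sq_vec by (simp add: sum_axis_sq)
      thus ?thesis by (simp add: power2_eq_iff_nonneg)
    qed
    finally have "maxn d = norm (?A *v x)" using k by simp
    also have "\<dots> \<le> onorm (\<lambda>x. ?A *v x) * norm x" by (rule onorm[OF bl_mv])
    finally show "maxn d \<le> onorm (\<lambda>x. ?A *v x)" using nx by simp
  qed
  thus ?thesis unfolding schatten_norm_def lp_norm_def maxn_def by simp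
qed

lemma schatten_udv:
  assumes U: "unitary_mat U" and V: "unitary_mat V"
  shows "schatten_norm p (U ** diag_of_vec d ** V) = lp_norm p d"
  using schatten_fin[OF U V] schatten_inf[OF U V] by (cases "p = \<infinity>") auto




lemma unitary_row: assumes U: "unitary_mat U" shows "(\<Sum>j\<in>UNIV. (norm (U$i$j))^2) = 1"
proof -
  have "(U ** adjoint_mat U) $ i $ i = 1" using U by (simp add: unitary_mat_def mat_def)
  hence "(\<Sum>j\<in>UNIV. U$i$j * cnj (U$i$j)) = 1" by (simp add: matrix_matrix_mult_def adjoint_mat_def)
  hence "(\<Sum>j\<in>UNIV. complex_of_real ((norm (U$i$j))^2)) = 1" by (simp only: complex_norm_square)
  hence "complex_of_real (\<Sum>j\<in>UNIV. (norm (U$i$j))^2) = 1" by simp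
  thus ?thesis by (simp only: of_real_eq_1_iff)
qed

lemma unitary_col: assumes U: "unitary_mat U" shows "(\<Sum>i\<in>UNIV. (norm (U$i$j))^2) = 1"
proof -
  have "(adjoint_mat U ** U) $ j $ j = 1" using U by (simp add: unitary_mat_def mat_def)
  hence "(\<Sum>i\<in>UNIV. U$i$j * cnj (U$i$j)) = 1" by (simp add: matrix_matrix_mult_def adjoint_mat_def mult.commute)
  hence "(\<Sum>i\<in>UNIV. complex_of_real ((norm (U$i$j))^2)) = 1" by (simp only: complex_norm_square)
  hence "complex_of_real (\<Sum>i\<in>UNIV. (norm (U$i$j))^2) = 1" by simp
  thus ?thesis by (simp only: of_real_eq_1_iff)
qed

lemma unitary_entry_le1: assumes U: "unitary_mat U" shows "norm (U$i$j) \<le> 1"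
proof -
  have "(norm (U$i$j))^2 \<le> (\<Sum>j'\<in>UNIV. (norm (U$i$j'))^2)"
    by (rule member_le_sum) auto
  hence "(norm (U$i$j))^2 \<le> 1^2" using unitary_row[OF U, of i] by simp
  thus ?thesis by (rule power2_le_imp_le) simp
qed

lemma ud_entry: "(U ** diag_of_vec d) $ i $ k = U$i$k * d$k"
proof -
  have "(U ** diag_of_vec d) $ i $ k = (\<Sum>j\<in>UNIV. U$i$j * (if j = k then d$j else 0))"
    unfolding diag_of_vec_def matrix_matrix_mult_def by simp
  also have "\<dots> = (\<Sum>j\<in>UNIV. if j = k then U$i$k * d$k else 0)" by (rule sum.cong) auto
  finally show ?thesis by simp
qed

lemma udv_diag: "(U ** diag_of_vec d ** V) $ i $ i = (\<Sum>k\<in>UNIV. U$i$k * d$k * V$k$i)"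
  by (simp add: matrix_matrix_mult_def[of "U ** diag_of_vec d" V] ud_entry)

lemma amgm: "(a::real) * b \<le> (a^2 + b^2) / 2"
proof -
  have "0 \<le> (a - b)^2" by simp
  thus ?thesis by (simp add: power2_eq_square algebra_simps)
qed

lemma pinch_weights:
  assumes U: "unitary_mat U" and V: "unitary_mat V"
  shows "(\<Sum>k\<in>UNIV. norm (U$i$k) * norm (V$k$i)) \<le> 1"
    and "(\<Sum>i\<in>UNIV. norm (U$i$k) * norm (V$k$i)) \<le> 1"
proof -
  have "(\<Sum>k\<in>UNIV. norm (U$i$k) * norm (V$k$i)) \<le> (\<Sum>k\<in>UNIV. ((norm (U$i$k))^2 + (norm (V$k$i))^2) / 2)"
    by (rule sum_mono) (rule amgm)
  also have "\<dots> = ((\<Sum>k\<in>UNIV. (norm (U$i$k))^2) + (\<Sum>k\<in>UNIV. (norm (V$k$i))^2)) / 2"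
    by (metis (no_types) sum.distrib sum_divide_distrib)
  also have "\<dots> = 1" using unitary_row[OF U] unitary_col[OF V] by simp
  finally show "(\<Sum>k\<in>UNIV. norm (U$i$k) * norm (V$k$i)) \<le> 1" .
  have "(\<Sum>i\<in>UNIV. norm (U$i$k) * norm (V$k$i)) \<le> (\<Sum>i\<in>UNIV. ((norm (U$i$k))^2 + (norm (V$k$i))^2) / 2)"
    by (rule sum_mono) (rule amgm)
  also have "\<dots> = ((\<Sum>i\<in>UNIV. (norm (U$i$k))^2) + (\<Sum>i\<in>UNIV. (norm (V$k$i))^2)) / 2"
    by (metis (no_types) sum.distrib sum_divide_distrib)
  also have "\<dots> = 1" using unitary_col[OF U] unitary_row[OF V] by simp
  finally show "(\<Sum>i\<in>UNIV. norm (U$i$k) * norm (V$k$i)) \<le> 1" .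
qed

lemma diag_entry_bound:
  "norm ((U ** diag_of_vec d ** V) $ i $ i) \<le> (\<Sum>k\<in>UNIV. (norm (U$i$k) * norm (V$k$i)) * norm (d$k))"
proof -
  have "norm ((U ** diag_of_vec d ** V) $ i $ i) \<le> (\<Sum>k\<in>UNIV. norm (U$i$k * d$k * V$k$i))"
    unfolding udv_diag by (rule norm_sum)
  also have "\<dots> = (\<Sum>k\<in>UNIV. (norm (U$i$k) * norm (V$k$i)) * norm (d$k))"
    by (simp add: norm_mult mult_ac)
  finally show ?thesis .
qed

lemma real_p: assumes "1 \<le> p" "p \<noteq> \<infinity>" shows "1 \<le> real_of_ereal p"
  using assms by (cases p) auto

lemma pinching:
  assumes U: "unitary_mat U" and V: "unitary_mat V" and p: "1 \<le> p"
  shows "lp_norm p (diag_vec (U ** diag_of_vec d ** V)) \<le> lp_norm p d"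
proof -
  let ?B = "U ** diag_of_vec d ** V"
  define a where "a i k = norm (U$i$k) * norm (V$k$i)" for i k
  have a0: "a i k \<ge> 0" for i k by (simp add: a_def)
  have arow: "(\<Sum>k\<in>UNIV. a i k) \<le> 1" for i unfolding a_def by (rule pinch_weights(1)[OF U V])
  have acol: "(\<Sum>i\<in>UNIV. a i k) \<le> 1" for k unfolding a_def by (rule pinch_weights(2)[OF U V])
  have Bi: "norm (diag_vec ?B $ i) \<le> (\<Sum>k\<in>UNIV. a i k * norm (d$k))" for i
    unfolding diag_vec_def a_def using diag_entry_bound by simp
  show ?thesis
  proof (cases "p = \<infinity>")
    case True
    have "norm (diag_vec ?B $ i) \<le> maxn d" for i
    proof -
      have "(\<Sum>k\<in>UNIV. a i k * norm (d$k)) \<le> (\<Sum>k\<in>UNIV. a i k * maxn d)"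
        by (rule sum_mono, rule mult_left_mono[OF maxn_ge a0])
      also have "\<dots> = (\<Sum>k\<in>UNIV. a i k) * maxn d" by (simp add: sum_distrib_right)
      also have "\<dots> \<le> maxn d" using mult_right_mono[OF arow[of i] maxn_nonneg[of d]] by simp
      finally show ?thesis using Bi[of i] by linarith
    qed
    hence "maxn (diag_vec ?B) \<le> maxn d" unfolding maxn_def[of "diag_vec ?B"] by (auto intro: Max.boundedI)
    thus ?thesis using True by (simp add: lp_norm_def maxn_def)
  next
    case False
    define r where "r = real_of_ereal p"
    have r: "1 \<le> r" unfolding r_def by (rule real_p[OF p False])
    have "(\<Sum>i\<in>UNIV. norm (diag_vec ?B $ i) powr r) \<le> (\<Sum>i\<in>UNIV. (\<Sum>k\<in>UNIV. a i k * norm (d$k)) powr r)"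
      by (rule sum_mono, rule powr_mono2) (use r Bi in auto)
    also have "\<dots> \<le> (\<Sum>i\<in>UNIV. (\<Sum>k\<in>UNIV. a i k * norm (d$k) powr r))"
      by (rule sum_mono, rule jensen_sub) (use r a0 arow in auto)
    also have "\<dots> = (\<Sum>k\<in>UNIV. (\<Sum>i\<in>UNIV. a i k) * norm (d$k) powr r)"
      by (subst sum.swap) (simp add: sum_distrib_right)
    also have "\<dots> \<le> (\<Sum>k\<in>UNIV. norm (d$k) powr r)"
    proof (rule sum_mono)
      fix k
      show "(\<Sum>i\<in>UNIV. a i k) * norm (d$k) powr r \<le> norm (d$k) powr r"
        using mult_right_mono[OF acol[of k], of "norm (d$k) powr r"] by simp
    qed
    finally have le: "(\<Sum>i\<in>UNIV. norm (diag_vec ?B $ i) powr r) \<le> (\<Sum>k\<in>UNIV. norm (d$k) powr r)" .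
    have "(\<Sum>i\<in>UNIV. norm (diag_vec ?B $ i) powr r) powr (1/r) \<le> (\<Sum>k\<in>UNIV. norm (d$k) powr r) powr (1/r)"
      by (rule powr_mono2) (use r le in \<open>auto intro: sum_nonneg\<close>)
    thus ?thesis using False unfolding lp_norm_def r_def by simp
  qed
qed




lemma lp_ge_maxn: assumes p: "1 \<le> p" shows "maxn x \<le> lp_norm p x"
proof (cases "p = \<infinity>")
  case True thus ?thesis by (simp add: lp_norm_def maxn_def)
next
  case False
  define r where "r = real_of_ereal p"
  have r: "1 \<le> r" unfolding r_def by (rule real_p[OF p False])
  obtain k where k: "norm (x$k) = maxn x" using maxn_attained by blast
  have "norm (x$k) powr r \<le> (\<Sum>i\<in>UNIV. norm (x$i) powr r)"
    by (rule member_le_sum) auto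
  hence "(norm (x$k) powr r) powr (1/r) \<le> (\<Sum>i\<in>UNIV. norm (x$i) powr r) powr (1/r)"
    by (rule powr_mono2[rotated 2]) (use r in auto)
  hence "norm (x$k) \<le> (\<Sum>i\<in>UNIV. norm (x$i) powr r) powr (1/r)"
    using r by (simp add: powr_powr)
  thus ?thesis using False k unfolding lp_norm_def r_def by simp
qed

lemma lp_le_N: assumes p: "1 \<le> p" shows "lp_norm p (x::complex^'n) \<le> real CARD('n) * maxn x"
proof (cases "p = \<infinity>")
  case True
  have "1 \<le> real CARD('n)" by simp
  hence "maxn x \<le> real CARD('n) * maxn x" using maxn_nonneg[of x] by (simp add: mult_le_cancel_right1)
  thus ?thesis using True by (simp add: lp_norm_def maxn_def)
next
  case False
  define r where "r = real_of_ereal p"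
  define N where "N = real CARD('n)"
  have r: "1 \<le> r" unfolding r_def by (rule real_p[OF p False])
  have N1: "1 \<le> N" unfolding N_def by simp
  have "(\<Sum>i\<in>UNIV. norm (x$i) powr r) \<le> (\<Sum>i\<in>(UNIV::'n set). maxn x powr r)"
    by (rule sum_mono, rule powr_mono2) (use r maxn_ge in auto)
  also have "\<dots> = N * maxn x powr r" by (simp add: N_def)
  also have "\<dots> \<le> N powr r * maxn x powr r"
  proof (rule mult_right_mono)
    show "N \<le> N powr r" using powr_mono[of 1 r N] r N1 by simp
  qed simp
  also have "\<dots> = (N * maxn x) powr r" using N1 maxn_nonneg[of x] by (simp add: powr_mult)
  finally have le: "(\<Sum>i\<in>UNIV. norm (x$i) powr r) \<le> (N * maxn x) powr r" .
  have "(\<Sum>i\<in>UNIV. norm (x$i) powr r) powr (1/r) \<le> ((N * maxn x) powr r) powr (1/r)"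
    by (rule powr_mono2) (use r le in \<open>auto intro: sum_nonneg\<close>)
  also have "\<dots> = N * maxn x" using r N1 maxn_nonneg[of x] by (simp add: powr_powr)
  finally show ?thesis using False unfolding lp_norm_def r_def N_def by simp
qed

lemma maxn_pos: assumes "x \<noteq> 0" shows "0 < maxn x"
proof -
  obtain i where "x$i \<noteq> 0" using assms by (auto simp: vec_eq_iff)
  hence "0 < norm (x$i)" by simp
  thus ?thesis using maxn_ge[of x i] by linarith
qed

lemma lp_pos: assumes "1 \<le> p" "x \<noteq> 0" shows "0 < lp_norm p x"
  using maxn_pos[OF assms(2)] lp_ge_maxn[OF assms(1), of x] by linarith

lemma lp_nonneg: assumes "1 \<le> p" shows "0 \<le> lp_norm p x"
  using maxn_nonneg[of x] lp_ge_maxn[OF assms, of x] by linarith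

definition Fn :: "complex^'n^'m \<Rightarrow> real" where
  "Fn Y = (\<Sum>i\<in>UNIV. \<Sum>j\<in>UNIV. norm (Y$i$j))"

lemma Fn_nonneg: "0 \<le> Fn Y"
  unfolding Fn_def by (intro sum_nonneg) auto

lemma entry_le_Fn: "norm (Y$i$j) \<le> Fn Y"
proof -
  have "norm (Y$i$j) \<le> (\<Sum>j'\<in>UNIV. norm (Y$i$j'))" by (rule member_le_sum) auto
  also have "\<dots> \<le> Fn Y" unfolding Fn_def by (rule member_le_sum) (auto intro: sum_nonneg)
  finally show ?thesis .
qed

lemma sandwich:
  assumes A: "\<And>a b. norm (A$a$b) \<le> 1" and B: "\<And>a b. norm (B$a$b) \<le> 1"
  shows "norm ((A ** Y ** B)$k$l) \<le> Fn Y"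
proof -
  have e1: "(A ** Y ** B)$k$l = (\<Sum>b\<in>UNIV. (A ** Y)$k$b * B$b$l)"
    unfolding matrix_matrix_mult_def[of "A ** Y" B] by simp
  have e2: "(A ** Y)$k$b = (\<Sum>a\<in>UNIV. A$k$a * Y$a$b)" for b
    unfolding matrix_matrix_mult_def by simp
  have "norm ((A ** Y ** B)$k$l) \<le> (\<Sum>b\<in>UNIV. norm ((A ** Y)$k$b * B$b$l))"
    unfolding e1 by (rule norm_sum)
  also have "\<dots> \<le> (\<Sum>b\<in>UNIV. \<Sum>a\<in>UNIV. norm (Y$a$b))"
  proof (rule sum_mono)
    fix b
    have "norm ((A ** Y)$k$b * B$b$l) \<le> norm ((A ** Y)$k$b)"
    proof -
      have "norm ((A ** Y)$k$b * B$b$l) = norm ((A ** Y)$k$b) * norm (B$b$l)" by (rule norm_mult)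
      also have "\<dots> \<le> norm ((A ** Y)$k$b) * 1" by (rule mult_left_mono[OF B norm_ge_zero])
      finally show ?thesis by simp
    qed
    also have "\<dots> \<le> (\<Sum>a\<in>UNIV. norm (A$k$a * Y$a$b))" unfolding e2 by (rule norm_sum)
    also have "\<dots> \<le> (\<Sum>a\<in>UNIV. norm (Y$a$b))"
    proof (rule sum_mono)
      fix a
      have "norm (A$k$a * Y$a$b) = norm (A$k$a) * norm (Y$a$b)" by (rule norm_mult)
      also have "\<dots> \<le> 1 * norm (Y$a$b)" by (rule mult_right_mono[OF A norm_ge_zero])
      finally show "norm (A$k$a * Y$a$b) \<le> norm (Y$a$b)" by simp
    qed
    finally show "norm ((A ** Y)$k$b * B$b$l) \<le> (\<Sum>a\<in>UNIV. norm (Y$a$b))" .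
  qed
  also have "\<dots> = Fn Y" unfolding Fn_def by (rule sum.swap)
  finally show ?thesis .
qed

lemma Fn_diag: "Fn (diag_of_vec (d::complex^'n)) \<le> real CARD('n) * maxn d"
proof -
  have "Fn (diag_of_vec d) = (\<Sum>i\<in>UNIV. norm (d$i))"
  proof -
    have "\<And>i. (\<Sum>j\<in>UNIV. norm (diag_of_vec d $ i $ j)) = (\<Sum>j\<in>UNIV. if j = i then norm (d$i) else 0)"
      by (rule sum.cong) (auto simp: diag_of_vec_def)
    thus ?thesis unfolding Fn_def by simp
  qed
  also have "\<dots> \<le> (\<Sum>i\<in>(UNIV::'n set). maxn d)" by (rule sum_mono) (rule maxn_ge)
  also have "\<dots> = real CARD('n) * maxn d" by simp
  finally show ?thesis .
qed

lemma Fn_le_entries: assumes "\<And>i j. norm (Y$i$j) \<le> c" shows "Fn (Y::complex^'n^'n) \<le> real CARD('n) * real CARD('n) * c"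
proof -
  have "Fn Y \<le> (\<Sum>i\<in>(UNIV::'n set). \<Sum>j\<in>(UNIV::'n set). c)" unfolding Fn_def
    by (intro sum_mono assms)
  thus ?thesis by simp
qed

lemma Fn_udv:
  assumes U: "unitary_mat U" and V: "unitary_mat V"
  shows "Fn (U ** diag_of_vec (d::complex^'n) ** V) \<le> real CARD('n) * real CARD('n) * (real CARD('n) * maxn d)"
proof (rule Fn_le_entries)
  fix i j
  have "norm ((U ** diag_of_vec d ** V)$i$j) \<le> Fn (diag_of_vec d)"
    by (rule sandwich) (use unitary_entry_le1[OF U] unitary_entry_le1[OF V] in auto)
  also have "\<dots> \<le> real CARD('n) * maxn d" by (rule Fn_diag)
  finally show "norm ((U ** diag_of_vec d ** V)$i$j) \<le> real CARD('n) * maxn d" .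
qed

lemma maxn_le_Fn:
  assumes U: "unitary_mat U" and V: "unitary_mat V"
  shows "maxn d \<le> Fn (U ** diag_of_vec d ** V)"
proof -
  let ?Y = "U ** diag_of_vec d ** V"
  have "adjoint_mat U ** ?Y ** adjoint_mat V = (adjoint_mat U ** U) ** diag_of_vec d ** (V ** adjoint_mat V)"
    by (simp only: matrix_mul_assoc)
  also have "\<dots> = diag_of_vec d" using U V by (simp add: unitary_mat_def)
  finally have e: "adjoint_mat U ** ?Y ** adjoint_mat V = diag_of_vec d" .
  obtain k where k: "norm (d$k) = maxn d" using maxn_attained by blast
  have "norm ((adjoint_mat U ** ?Y ** adjoint_mat V)$k$k) \<le> Fn ?Y"
    by (rule sandwich) (use unitary_entry_le1[OF unitary_adjoint[OF U]] unitary_entry_le1[OF unitary_adjoint[OF V]] in auto)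
  thus ?thesis using k e by (simp add: diag_of_vec_def)
qed




definition smat :: "complex \<Rightarrow> complex^'n^'m \<Rightarrow> complex^'n^'m" where
  "smat c M = (\<chi> i j. c * M$i$j)"

definition Emat :: "'m \<Rightarrow> 'n \<Rightarrow> complex^'n^'m" where
  "Emat a b = (\<chi> i j. if i = a \<and> j = b then 1 else 0)"

lemma T0: assumes "complex_linear_mat T" shows "T 0 = 0"
proof -
  have "T (0 + 0) = T 0 + T 0" using assms unfolding complex_linear_mat_def by blast
  thus ?thesis by simp
qed

lemma T_sum: assumes "complex_linear_mat T" shows "T (sum f S) = (\<Sum>x\<in>S. T (f x))"
proof (induction S rule: infinite_finite_induct)
  case (infinite A) thus ?case using T0[OF assms] by simp
next
  case empty thus ?case using T0[OF assms] by simp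
next
  case (insert x F)
  thus ?case using assms unfolding complex_linear_mat_def by simp
qed

lemma T_smat: assumes "complex_linear_mat T" shows "T (smat c M) = smat c (T M)"
  using assms unfolding complex_linear_mat_def smat_def by blast

lemma mat_expand: "X = (\<Sum>a\<in>UNIV. \<Sum>b\<in>UNIV. smat (X$a$b) (Emat a b))"
proof -
  have "(\<Sum>a\<in>UNIV. \<Sum>b\<in>UNIV. smat (X$a$b) (Emat a b)) $ i $ j = X $ i $ j" for i j
  proof -
    have "(\<Sum>a\<in>UNIV. \<Sum>b\<in>UNIV. smat (X$a$b) (Emat a b)) $ i $ j
       = (\<Sum>a\<in>UNIV. \<Sum>b\<in>UNIV. X$a$b * (if i = a \<and> j = b then 1 else 0))"
      by (simp add: sum_component smat_def Emat_def)
    also have "\<dots> = (\<Sum>a\<in>UNIV. if a = i then X$i$j else 0)"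
    proof (rule sum.cong[OF refl])
      fix a
      show "(\<Sum>b\<in>UNIV. X$a$b * (if i = a \<and> j = b then 1 else 0)) = (if a = i then X$i$j else 0)"
      proof (cases "a = i")
        case True
        have "(\<Sum>b\<in>UNIV. X$a$b * (if i = a \<and> j = b then 1 else 0)) = (\<Sum>b\<in>UNIV. if b = j then X$i$j else 0)"
          by (rule sum.cong) (auto simp: True)
        thus ?thesis using True by simp
      next
        case False thus ?thesis by simp
      qed
    qed
    also have "\<dots> = X$i$j" by simp
    finally show ?thesis .
  qed
  thus ?thesis by (simp add: vec_eq_iff)
qed

lemma Fn_add: "Fn (A + B) \<le> Fn A + Fn B"
proof -
  have "Fn (A + B) \<le> (\<Sum>i\<in>UNIV. \<Sum>j\<in>UNIV. norm (A$i$j) + norm (B$i$j))"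
    unfolding Fn_def by (intro sum_mono) (simp add: norm_triangle_ineq)
  also have "\<dots> = Fn A + Fn B" unfolding Fn_def by (simp add: sum.distrib)
  finally show ?thesis .
qed

lemma Fn_zero: "Fn 0 = 0" by (simp add: Fn_def)

lemma Fn_sum: "Fn (sum f S) \<le> (\<Sum>x\<in>S. Fn (f x))"
proof (induction S rule: infinite_finite_induct)
  case (infinite A) thus ?case by (simp add: Fn_zero)
next
  case empty thus ?case by (simp add: Fn_zero)
next
  case (insert x F)
  have "Fn (sum f (insert x F)) = Fn (f x + sum f F)" using insert by simp
  also have "\<dots> \<le> Fn (f x) + Fn (sum f F)" by (rule Fn_add)
  also have "\<dots> \<le> Fn (f x) + (\<Sum>y\<in>F. Fn (f y))" using insert by simp
  finally show ?case using insert by simp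
qed

lemma Fn_smat: "Fn (smat c M) = norm c * Fn M"
  by (simp add: Fn_def smat_def norm_mult sum_distrib_left)

definition CT :: "(complex^'n^'n \<Rightarrow> complex^'n^'n) \<Rightarrow> real" where
  "CT T = (\<Sum>a\<in>UNIV. \<Sum>b\<in>UNIV. Fn (T (Emat a b)))"

lemma CT_nonneg: "0 \<le> CT T"
  unfolding CT_def by (intro sum_nonneg Fn_nonneg)

lemma T_bound:
  assumes lin: "complex_linear_mat T"
  shows "Fn (T X) \<le> CT T * Fn X"
proof -
  have "T X = (\<Sum>a\<in>UNIV. \<Sum>b\<in>UNIV. smat (X$a$b) (T (Emat a b)))"
    by (subst mat_expand[of X]) (simp add: T_sum[OF lin] T_smat[OF lin])
  hence "Fn (T X) = Fn (\<Sum>a\<in>UNIV. \<Sum>b\<in>UNIV. smat (X$a$b) (T (Emat a b)))" by simp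
  also have "\<dots> \<le> (\<Sum>a\<in>UNIV. Fn (\<Sum>b\<in>UNIV. smat (X$a$b) (T (Emat a b))))"
    by (rule Fn_sum)
  also have "\<dots> \<le> (\<Sum>a\<in>UNIV. \<Sum>b\<in>UNIV. Fn (smat (X$a$b) (T (Emat a b))))"
    by (rule sum_mono) (rule Fn_sum)
  also have "\<dots> \<le> (\<Sum>a\<in>UNIV. \<Sum>b\<in>UNIV. Fn X * Fn (T (Emat a b)))"
  proof (rule sum_mono, rule sum_mono)
    fix a b
    show "Fn (smat (X$a$b) (T (Emat a b))) \<le> Fn X * Fn (T (Emat a b))"
      unfolding Fn_smat by (rule mult_right_mono[OF entry_le_Fn Fn_nonneg])
  qed
  also have "\<dots> = CT T * Fn X" by (simp add: CT_def sum_distrib_left mult.commute)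
  finally show ?thesis .
qed

lemma ratio_bound:
  assumes lin: "complex_linear_mat T" and p: "1 \<le> p"
  shows "schatten_norm p (T X) \<le> (real CARD('n) ^ 4 * CT T) * schatten_norm p (X::complex^'n^'n)"
proof -
  define N where "N = real CARD('n)"
  have N0: "0 \<le> N" by (simp add: N_def)
  obtain U V d where U: "unitary_mat U" and V: "unitary_mat V" and X: "X = U ** diag_of_vec d ** V"
    using svd by blast
  obtain U' V' d' where U': "unitary_mat U'" and V': "unitary_mat V'" and TX: "T X = U' ** diag_of_vec d' ** V'"
    using svd by blast
  have "schatten_norm p (T X) = lp_norm p d'" using TX schatten_udv[OF U' V'] by simp
  also have "\<dots> \<le> N * maxn d'" unfolding N_def by (rule lp_le_N[OF p])
  also have "\<dots> \<le> N * Fn (T X)" unfolding TX by (rule mult_left_mono[OF maxn_le_Fn[OF U' V'] N0])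
  also have "\<dots> \<le> N * (CT T * Fn X)" by (rule mult_left_mono[OF T_bound[OF lin] N0])
  also have "\<dots> \<le> N * (CT T * (N * N * (N * maxn d)))"
  proof -
    have "Fn X \<le> N * N * (N * maxn d)" unfolding X N_def by (rule Fn_udv[OF U V])
    hence "CT T * Fn X \<le> CT T * (N * N * (N * maxn d))" by (rule mult_left_mono[OF _ CT_nonneg])
    thus ?thesis by (rule mult_left_mono[OF _ N0])
  qed
  also have "\<dots> \<le> N * (CT T * (N * N * (N * lp_norm p d)))"
  proof -
    have "N * maxn d \<le> N * lp_norm p d" by (rule mult_left_mono[OF lp_ge_maxn[OF p] N0])
    hence "N * N * (N * maxn d) \<le> N * N * (N * lp_norm p d)" by (rule mult_left_mono) (simp add: N0)
    hence "CT T * (N * N * (N * maxn d)) \<le> CT T * (N * N * (N * lp_norm p d))" by (rule mult_left_mono[OF _ CT_nonneg])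
    thus ?thesis by (rule mult_left_mono[OF _ N0])
  qed
  also have "\<dots> = (N ^ 4 * CT T) * schatten_norm p X"
    using X schatten_udv[OF U V] by (simp add: power4_eq_xxxx ac_simps)
  finally show ?thesis unfolding N_def .
qed




lemma diag_vec_diag [simp]: "diag_vec (diag_of_vec d) = d"
  by (simp add: diag_vec_def diag_of_vec_def vec_eq_iff)

lemma diag_zero: "diag_of_vec 0 = 0"
  by (simp add: diag_of_vec_def vec_eq_iff)

lemma sch_pos:
  assumes p: "1 \<le> p" and X: "X \<noteq> 0"
  shows "0 < schatten_norm p X"
proof -
  obtain U V d where U: "unitary_mat U" and V: "unitary_mat V" and e: "X = U ** diag_of_vec d ** V"
    using svd by blast
  have "d \<noteq> 0"
  proof
    assume "d = 0"
    hence "X = U ** 0 ** V" using e diag_zero by metis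
    thus False using X by simp
  qed
  thus ?thesis using e schatten_udv[OF U V] lp_pos[OF p] by simp
qed

lemma compressed_ratio:
  assumes lin: "complex_linear_mat T" and p: "1 \<le> p"
    and U1: "unitary_mat U1" and U2: "unitary_mat U2" and V1: "unitary_mat V1" and V2: "unitary_mat V2"
    and l: "l \<noteq> 0"
  shows "lp_norm p (compressed_map T U1 U2 V1 V2 l) / lp_norm p l \<le> schatten_opnorm p T"
proof -
  define Y where "Y = U1 ** diag_of_vec l ** V1"
  have sY: "schatten_norm p Y = lp_norm p l" unfolding Y_def by (rule schatten_udv[OF U1 V1])
  have lpos: "0 < lp_norm p l" by (rule lp_pos[OF p l])
  have Y0: "Y \<noteq> 0"
  proof
    assume "Y = 0"
    hence "schatten_norm p Y = schatten_norm p ((mat 1 :: complex^'a^'a) ** diag_of_vec (0::complex^'a) ** mat 1)" by (simp add: diag_zero)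
    also have "\<dots> = lp_norm p (0::complex^'a)" by (rule schatten_udv[OF unitary_one unitary_one])
    also have "\<dots> = 0" using lp_le_N[OF p, of "0::complex^'a"] lp_nonneg[OF p, of "0::complex^'a"]
      by (simp add: maxn_def)
    finally show False using sY lpos by simp
  qed
  have bdd: "bdd_above ((\<lambda>X. schatten_norm p (T X) / schatten_norm p X) ` {X. X \<noteq> 0})"
  proof (rule bdd_aboveI2)
    fix X :: "complex^'a^'a" assume "X \<in> {X. X \<noteq> 0}"
    hence "0 < schatten_norm p X" using sch_pos[OF p] by simp
    thus "schatten_norm p (T X) / schatten_norm p X \<le> real CARD('a) ^ 4 * CT T"
      using ratio_bound[OF lin p, of X] by (simp add: divide_le_eq)
  qed
  have rY: "schatten_norm p (T Y) / schatten_norm p Y \<le> schatten_opnorm p T"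
    unfolding schatten_opnorm_def by (rule cSUP_upper[OF _ bdd]) (simp add: Y0)
  obtain W Z d' where W: "unitary_mat W" and Z: "unitary_mat Z" and TY: "T Y = W ** diag_of_vec d' ** Z"
    using svd by blast
  have "compressed_map T U1 U2 V1 V2 l = diag_vec (U2 ** T Y ** V2)"
    by (simp add: compressed_map_def Y_def)
  also have "U2 ** T Y ** V2 = (U2 ** W) ** diag_of_vec d' ** (Z ** V2)"
    by (simp add: TY matrix_mul_assoc)
  finally have "lp_norm p (compressed_map T U1 U2 V1 V2 l) \<le> lp_norm p d'"
    using pinching[OF unitary_mult[OF U2 W] unitary_mult[OF Z V2] p] by simp
  also have "\<dots> = schatten_norm p (T Y)" using TY schatten_udv[OF W Z] by simp
  also have "\<dots> \<le> schatten_opnorm p T * schatten_norm p Y"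
    using rY sch_pos[OF p Y0] by (simp add: divide_le_eq)
  finally show ?thesis using sY lpos by (simp add: divide_le_eq)
qed

theorem proposition4p1:
  fixes T :: "complex^'n^'n \<Rightarrow> complex^'n^'n" and p :: ereal
  assumes "complex_linear_mat T"
    and "1 \<le> p"
  shows "schatten_opnorm p T =
    (SUP U\<in>{(U1, U2, V1, V2). unitary_mat U1 \<and> unitary_mat U2 \<and> unitary_mat V1 \<and> unitary_mat V2}.
       (case U of (U1, U2, V1, V2) \<Rightarrow> lp_opnorm p (compressed_map T U1 U2 V1 V2)))"
proof -
  note lin = assms(1) and p = assms(2)
  define Q where "Q = {(U1::complex^'n^'n, U2::complex^'n^'n, V1::complex^'n^'n, V2::complex^'n^'n).
      unitary_mat U1 \<and> unitary_mat U2 \<and> unitary_mat V1 \<and> unitary_mat V2}"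
  define g where "g = (\<lambda>U. case U of (U1, U2, V1, V2) \<Rightarrow> lp_opnorm p (compressed_map T U1 U2 V1 V2))"
  define S where "S = schatten_opnorm p T"
  have one_ne: "(\<chi> i. (1::complex)) \<noteq> (0::complex^'n)" by (simp add: vec_eq_iff)
  have cm_bdd: "bdd_above ((\<lambda>l. lp_norm p (compressed_map T U1 U2 V1 V2 l) / lp_norm p l) ` {l. l \<noteq> 0})"
    if "unitary_mat U1" "unitary_mat U2" "unitary_mat V1" "unitary_mat V2" for U1 U2 V1 V2 :: "complex^'n^'n"
    by (rule bdd_aboveI2[where M=S]) (use compressed_ratio[OF lin p that] in \<open>auto simp: S_def\<close>)
  have gle: "g q \<le> S" if "q \<in> Q" for q
  proof -
    obtain U1 U2 V1 V2 where q: "q = (U1, U2, V1, V2)" and u: "unitary_mat U1" "unitary_mat U2" "unitary_mat V1" "unitary_mat V2"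
      using \<open>q \<in> Q\<close> unfolding Q_def by auto
    have "lp_opnorm p (compressed_map T U1 U2 V1 V2) \<le> S"
      unfolding lp_opnorm_def
      by (rule cSUP_least) (use one_ne compressed_ratio[OF lin p u] in \<open>auto simp: S_def\<close>)
    thus ?thesis using q by (simp add: g_def)
  qed
  have Qne: "Q \<noteq> {}" using unitary_one unfolding Q_def by blast
  have bddg: "bdd_above (g ` Q)" using gle by (intro bdd_aboveI2) auto
  have le1: "(SUP q\<in>Q. g q) \<le> S" by (rule cSUP_least[OF Qne gle])
  have le2: "S \<le> (SUP q\<in>Q. g q)"
    unfolding S_def schatten_opnorm_def
  proof (rule cSUP_least)
    show "{X :: complex^'n^'n. X \<noteq> 0} \<noteq> {}"
    proof -
      have "(mat 1 :: complex^'n^'n) \<noteq> 0" by (simp add: vec_eq_iff mat_def)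
      thus ?thesis by blast
    qed
  next
    fix X :: "complex^'n^'n" assume "X \<in> {X. X \<noteq> 0}"
    hence X0: "X \<noteq> 0" by simp
    obtain U1 V1 d where U1: "unitary_mat U1" and V1: "unitary_mat V1" and eX: "X = U1 ** diag_of_vec d ** V1"
      using svd by blast
    obtain W Z d' where W: "unitary_mat W" and Z: "unitary_mat Z" and eTX: "T X = W ** diag_of_vec d' ** Z"
      using svd by blast
    have d0: "d \<noteq> 0"
    proof
      assume "d = 0"
      hence "X = U1 ** 0 ** V1" using eX diag_zero by metis
      thus False using X0 by simp
    qed
    have "compressed_map T U1 (adjoint_mat W) V1 (adjoint_mat Z) d = diag_vec (adjoint_mat W ** T X ** adjoint_mat Z)"
      by (simp add: compressed_map_def eX)
    also have "adjoint_mat W ** T X ** adjoint_mat Z = (adjoint_mat W ** W) ** diag_of_vec d' ** (Z ** adjoint_mat Z)"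
      by (simp add: eTX matrix_mul_assoc)
    also have "\<dots> = diag_of_vec d'" using W Z by (simp add: unitary_mat_def)
    finally have cm: "compressed_map T U1 (adjoint_mat W) V1 (adjoint_mat Z) d = d'" by simp
    have qQ: "(U1, adjoint_mat W, V1, adjoint_mat Z) \<in> Q"
      using U1 V1 unitary_adjoint[OF W] unitary_adjoint[OF Z] unfolding Q_def by simp
    have "schatten_norm p (T X) / schatten_norm p X = lp_norm p d' / lp_norm p d"
      using eX eTX schatten_udv[OF U1 V1] schatten_udv[OF W Z] by simp
    also have "\<dots> = lp_norm p (compressed_map T U1 (adjoint_mat W) V1 (adjoint_mat Z) d) / lp_norm p d"
      using cm by simp
    also have "\<dots> \<le> lp_opnorm p (compressed_map T U1 (adjoint_mat W) V1 (adjoint_mat Z))"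
      unfolding lp_opnorm_def
      by (rule cSUP_upper[OF _ cm_bdd[OF U1 unitary_adjoint[OF W] V1 unitary_adjoint[OF Z]]]) (simp add: d0)
    also have "\<dots> = g (U1, adjoint_mat W, V1, adjoint_mat Z)" by (simp add: g_def)
    also have "\<dots> \<le> (SUP q\<in>Q. g q)" by (rule cSUP_upper[OF qQ bddg])
    finally show "schatten_norm p (T X) / schatten_norm p X \<le> (SUP q\<in>Q. g q)" .
  qed
  have "S = (SUP q\<in>Q. g q)" using le1 le2 by simp
  thus ?thesis unfolding S_def Q_def g_def .
qed


end
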